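(* Let $s$ be an indeterminate; for an integer $k\ge 0$ put $\{k\}_s=s^k-s^{-k}$ and $\{k\}_s!=\{1\}_s\{2\}_s\cdots\{k\}_s$ (with $\{0\}_s!=1$). For positive integers $m,n$ let \[V_W(m,n)=\sum_{i=0}^{\min(m,n)-1}(-1)^{m+n}s^{-\frac{i^2+3i}{2}}\frac{\{m+i\}_s!\,\{n+i\}_s!\,\{i\}_s!}{\{1\}_s\,\{m-i-1\}_s!\,\{n-i-1\}_s!\,\{2i+1\}_s!}\] (the colored Jones polynomial of the Whitehead link). Let $E_m,E_n,Q_m,Q_n$ act on functions $f(m,n)$ by $(E_mf)(m,n)=f(m+1,n)$, $(E_nf)(m,n)=f(m,n+1)$, $(Q_mf)(m,n)=s^mf(m,n)$, $(Q_nf)(m,n)=s^nf(m,n)$. Then \[A^{\mathrm{bi}}_{s;mn}(W)=(E_n-sQ_n^2)(sQ_m^2E_m-1)-(E_m-sQ_m^2)(sQ_n^2E_n-1)\] satisfies $A^{\mathrm{bi}}_{s;mn}(W)\,V_W=0$.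
   Context: Products of operators are compositions; in particular $E_mQ_m=sQ_mE_m$, $E_nQ_n=sQ_nE_n$, and $E_m$ commutes with $Q_n$ and $E_n$, $E_n$ commutes with $Q_m$. *)

theory Defs
  imports "HOL-Computational_Algebra.Polynomial" "HOL-Computational_Algebra.Fraction_Field"
begin

definition sX :: "rat poly fract" where
  "sX = Fract [:0, 1:] 1"

definition qbr :: "'a::field \<Rightarrow> nat \<Rightarrow> 'a" where
  "qbr s k = s ^ k - inverse (s ^ k)"

definition qfact :: "'a::field \<Rightarrow> nat \<Rightarrow> 'a" where
  "qfact s k = (\<Prod>j\<in>{1..k}. qbr s j)"

definition VW :: "'a::field \<Rightarrow> nat \<Rightarrow> nat \<Rightarrow> 'a" where
  "VW s m n = (\<Sum>i<min m n.
      (-1) ^ (m + n) * s powi (- int ((i^2 + 3*i) div 2)) *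
      (qfact s (m + i) * qfact s (n + i) * qfact s i) /
      (qbr s 1 * qfact s (m - i - 1) * qfact s (n - i - 1) * qfact s (2*i + 1)))"

type_synonym 'a op2 = "(nat \<Rightarrow> nat \<Rightarrow> 'a) \<Rightarrow> (nat \<Rightarrow> nat \<Rightarrow> 'a)"

definition Em :: "'a op2" where "Em f = (\<lambda>m n. f (Suc m) n)"
definition En :: "'a op2" where "En f = (\<lambda>m n. f m (Suc n))"
definition Qm :: "'a::field \<Rightarrow> 'a op2" where "Qm s f = (\<lambda>m n. s ^ m * f m n)"
definition Qn :: "'a::field \<Rightarrow> 'a op2" where "Qn s f = (\<lambda>m n. s ^ n * f m n)"

definition op_sub :: "'a::field op2 \<Rightarrow> 'a op2 \<Rightarrow> 'a op2" where
  "op_sub P R = (\<lambda>f m n. P f m n - R f m n)"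
definition op_smul :: "'a::field \<Rightarrow> 'a op2 \<Rightarrow> 'a op2" where
  "op_smul c P = (\<lambda>f m n. c * P f m n)"

definition Abi :: "'a::field \<Rightarrow> 'a op2" where
  "Abi s = op_sub
     (op_sub En (op_smul s (Qn s \<circ> Qn s)) \<circ> op_sub (op_smul s (Qm s \<circ> Qm s \<circ> Em)) id)
     (op_sub Em (op_smul s (Qm s \<circ> Qm s)) \<circ> op_sub (op_smul s (Qn s \<circ> Qn s \<circ> En)) id)"

end

theory Submission imports Defs begin

lemma Fract_pow: "(Fract (p::'a::idom) 1) ^ k = Fract (p ^ k) 1"
  by (induction k) (simp_all add: One_fract_def)

lemma sX_pow: "sX ^ k = Fract ([:0,1:] ^ k) 1"
  unfolding sX_def by (rule Fract_pow)

lemma sX_nz: "sX \<noteq> 0"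
  unfolding sX_def Zero_fract_def by (simp add: eq_fract)

lemma qbr_sX_nz: assumes "k \<ge> 1" shows "qbr sX k \<noteq> 0"
proof
  assume h: "qbr sX k = 0"
  have nz: "sX ^ k \<noteq> 0" using sX_nz by simp
  from h have "sX ^ k = inverse (sX ^ k)" unfolding qbr_def by simp
  hence "sX ^ k * sX ^ k = 1" using nz by (metis right_inverse)
  hence "sX ^ (2*k) = 1" by (simp add: power_mult power2_eq_square mult_2 power_add)
  hence "Fract ([:0,1::rat:] ^ (2*k)) 1 = Fract 1 1" by (simp add: sX_pow One_fract_def)
  hence "[:0,1::rat:] ^ (2*k) = 1" by (simp add: eq_fract)
  hence "degree ([:0,1::rat:] ^ (2*k)) = 0" by simp
  moreover have "degree ([:0,1::rat:] ^ (2*k)) = 2*k" by (simp add: degree_power_eq)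
  ultimately show False using assms by simp
qed

lemma key:
  fixes A B T s :: "'a::field"
  assumes "A \<noteq> 0" "B \<noteq> 0" "T \<noteq> 0" "s \<noteq> 0"
  shows "(A^2*T^2*s - B^2*T^2*s) * ((A*T^2*s - inverse (A*T^2*s)) * (B*T^2*s - inverse (B*T^2*s))
           - (A - inverse A) * (B - inverse B))
        + (A^2*B^2*T^4*s^2 - 1) * ((A*T^2*s - inverse (A*T^2*s)) * (B - inverse B)
           - (A - inverse A) * (B*T^2*s - inverse (B*T^2*s))) = 0"
  using assms by (simp add: field_simps) algebra


lemma qfact_Suc: "qfact s (Suc k) = qfact s k * qbr s (Suc k)"
  unfolding qfact_def by simp

lemma qbr_0: "qbr s 0 = 0" unfolding qbr_def by simp

definition PP :: "'a::field \<Rightarrow> nat \<Rightarrow> nat \<Rightarrow> 'a" where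
  "PP s m i = (if i < m then qfact s (m+i) / qfact s (m-i-1) else 0)"
definition RR :: "'a::field \<Rightarrow> nat \<Rightarrow> nat \<Rightarrow> 'a" where
  "RR s m i = qfact s (m+i) / qfact s (m-i)"
definition cc :: "'a::field \<Rightarrow> nat \<Rightarrow> 'a" where
  "cc s i = s powi (- int ((i^2 + 3*i) div 2)) * qfact s i / (qbr s 1 * qfact s (2*i+1))"

lemma PP_low:
  assumes nz: "\<forall>k\<ge>1. qbr s k \<noteq> 0" and "i \<le> m"
  shows "PP s m i = RR s m i * qbr s (m-i)"
proof (cases "i = m")
  case True thus ?thesis by (simp add: PP_def qbr_0)
next
  case False
  hence im: "i < m" using assms by simp
  hence e: "m - i = Suc (m-i-1)" by simp
  have q: "qbr s (m-i) \<noteq> 0" using nz im by simp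
  have "qfact s (m-i) = qfact s (m-i-1) * qbr s (m-i)" by (metis e qfact_Suc)
  thus ?thesis using im q by (simp add: PP_def RR_def)
qed

lemma PP_high:
  assumes "i \<le> m"
  shows "PP s (Suc m) i = RR s m i * qbr s (m+1+i)"
proof -
  have e: "Suc m + i = Suc (m+i)" by simp
  have "qfact s (Suc m + i) = qfact s (m+i) * qbr s (m+1+i)" by (subst e, subst qfact_Suc, simp)
  moreover have "Suc m - i - 1 = m - i" using assms by simp
  ultimately show ?thesis using assms by (simp add: PP_def RR_def)
qed

lemma VW_alt:
  assumes "N \<ge> min m n"
  shows "VW s m n = (-1)^(m+n) * (\<Sum>i<N. cc s i * PP s m i * PP s n i)"
proof -
  have "(\<Sum>i<N. cc s i * PP s m i * PP s n i) = (\<Sum>i<min m n. cc s i * PP s m i * PP s n i)"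
    using assms by (intro sum.mono_neutral_right) (auto simp: PP_def)
  thus ?thesis unfolding VW_def
    by (simp add: sum_distrib_left PP_def cc_def divide_inverse inverse_mult_distrib ac_simps)
qed

lemma Abi_expand:
  "Abi s f m n = (s^(2*m+1) - s^(2*n+1)) * (f (Suc m) (Suc n) - f m n)
     + (s^(2*m+2*n+2) - 1) * (f m (Suc n) - f (Suc m) n)"
proof -
  have e: "s^(2*m+2*n+2) = s * s^n * s^n * (s * s^m * s^m)" "s^(2*m+1) = s*s^m*s^m" "s^(2*n+1) = s*s^n*s^n"
    unfolding mult_2 power_add by (simp_all add: ac_simps power2_eq_square)
  show ?thesis unfolding e
  unfolding Abi_def op_sub_def op_smul_def Em_def En_def Qm_def Qn_def comp_def id_def
  by (simp add: algebra_simps)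
qed

lemma term_zero:
  fixes s :: "'a::field"
  assumes s0: "s \<noteq> 0" and "i \<le> m" "i \<le> n"
  shows "(s^(2*m+1) - s^(2*n+1)) * (qbr s (m+1+i) * qbr s (n+1+i) - qbr s (m-i) * qbr s (n-i))
       + (s^(2*m+2*n+2) - 1) * (qbr s (m+1+i) * qbr s (n-i) - qbr s (m-i) * qbr s (n+1+i)) = 0"
proof -
  obtain p q where pq: "m = i + p" "n = i + q" using assms by (metis le_add_diff_inverse)
  have 1: "s^(2*m+1) = (s^p)^2*(s^i)^2*s" "s^(2*n+1) = (s^q)^2*(s^i)^2*s"
    "s^(2*m+2*n+2) = (s^p)^2*(s^q)^2*(s^i)^4*s^2"
    unfolding pq by (simp_all add: power_add power_mult power2_eq_square algebra_simps flip: power_mult_distrib)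
  have 2: "qbr s (m+1+i) = s^p*(s^i)^2*s - inverse (s^p*(s^i)^2*s)"
          "qbr s (n+1+i) = s^q*(s^i)^2*s - inverse (s^q*(s^i)^2*s)"
          "qbr s (m-i) = s^p - inverse (s^p)" "qbr s (n-i) = s^q - inverse (s^q)"
    unfolding pq qbr_def by (simp_all add: power_add power2_eq_square algebra_simps)
  show ?thesis unfolding 1 2
    using key[of "s^p" "s^q" "s^i" s] s0 by (simp add: algebra_simps)
qed

theorem mainTheorem2:
  fixes m n :: nat
  assumes "m \<ge> 1" and "n \<ge> 1"
  shows "Abi sX (VW sX) m n = 0"
proof -
  let ?s = sX
  have nz: "\<forall>k\<ge>1. qbr ?s k \<noteq> 0" using qbr_sX_nz by blast
  define N where "N = Suc (min m n)"
  define X where "X = ?s^(2*m+1) - ?s^(2*n+1)"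
  define Y where "Y = ?s^(2*m+2*n+2) - (1::rat poly fract)"
  have t: "X * (PP ?s (Suc m) i * PP ?s (Suc n) i - PP ?s m i * PP ?s n i)
         + Y * (PP ?s (Suc m) i * PP ?s n i - PP ?s m i * PP ?s (Suc n) i) = 0" if "i \<in> {..<N}" for i
  proof -
    have im: "i \<le> m" "i \<le> n" using that by (auto simp: N_def)
    have "X * (PP ?s (Suc m) i * PP ?s (Suc n) i - PP ?s m i * PP ?s n i)
         + Y * (PP ?s (Suc m) i * PP ?s n i - PP ?s m i * PP ?s (Suc n) i)
       = RR ?s m i * RR ?s n i * ((?s^(2*m+1) - ?s^(2*n+1)) * (qbr ?s (m+1+i) * qbr ?s (n+1+i) - qbr ?s (m-i) * qbr ?s (n-i))
       + (?s^(2*m+2*n+2) - 1) * (qbr ?s (m+1+i) * qbr ?s (n-i) - qbr ?s (m-i) * qbr ?s (n+1+i)))"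
      unfolding X_def Y_def PP_low[OF nz im(1)] PP_low[OF nz im(2)] PP_high[OF im(1)] PP_high[OF im(2)]
      by (simp add: algebra_simps)
    also have "\<dots> = 0" using term_zero[OF sX_nz im] by simp
    finally show ?thesis .
  qed
  have V: "VW ?s a b = (-1)^(a+b) * (\<Sum>i<N. cc ?s i * PP ?s a i * PP ?s b i)"
    if "a \<in> {m, Suc m}" "b \<in> {n, Suc n}" for a b
    using that by (intro VW_alt) (auto simp: N_def)
  define S where "S a b = (\<Sum>i<N. cc ?s i * PP ?s a i * PP ?s b i)" for a b
  have V11: "VW ?s (Suc m) (Suc n) = (-1)^(m+n) * S (Suc m) (Suc n)" using V[of "Suc m" "Suc n"] by (simp add: S_def)
  have V00: "VW ?s m n = (-1)^(m+n) * S m n" using V[of m n] by (simp add: S_def)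
  have V10: "VW ?s (Suc m) n = - ((-1)^(m+n) * S (Suc m) n)" using V[of "Suc m" n] by (simp add: S_def)
  have V01: "VW ?s m (Suc n) = - ((-1)^(m+n) * S m (Suc n))" using V[of m "Suc n"] by (simp add: S_def)
  have "Abi ?s (VW ?s) m n = (-1)^(m+n) * (X * (S (Suc m) (Suc n) - S m n) + Y * (S (Suc m) n - S m (Suc n)))"
    unfolding Abi_expand X_def[symmetric] Y_def[symmetric] V11 V00 V10 V01 by (simp add: algebra_simps)
  also have "X * (S (Suc m) (Suc n) - S m n) + Y * (S (Suc m) n - S m (Suc n))
     = (\<Sum>i<N. cc ?s i * (X * (PP ?s (Suc m) i * PP ?s (Suc n) i - PP ?s m i * PP ?s n i)
         + Y * (PP ?s (Suc m) i * PP ?s n i - PP ?s m i * PP ?s (Suc n) i)))"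
    unfolding S_def by (simp add: sum_distrib_left sum.distrib sum_subtractf algebra_simps)
  also have "\<dots> = 0" using t by simp
  finally show ?thesis by simp
qed

end
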